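(* Let $V$ be a finite-dimensional vector space over $\mathbb{F}_q$, let $\mathcal{F}=\{\langle f_1\rangle,\dots,\langle f_\nu\rangle\}$ be a projective point family in $V$, and let $\varphi:\mathbb{F}_q^\nu\to V$ be a parent function of $\mathcal{F}$. Endow $\mathbb{F}_q^\nu$ with the Hamming weight. Then $\operatorname{wt}_{\mathcal{F}}=\operatorname{wt}_{\mathrm{quot},\varphi}$, and the parent code $\ker(\varphi)$ has minimum Hamming distance $d_H(\ker\varphi)=\min_{x,y\in\ker\varphi,\,x\neq y}d_H(x,y)\ge 3$.
   Context: A projective point family is a set of pairwise linearly independent nonzero vectors (equivalently, distinct $1$-dimensional subspaces) $\mathcal{F}$ in $V$, with projective weight $\operatorname{wt}_{\mathcal{F}}(x)=\min(\{|I|:I\subseteq\mathcal{F},\ x\in\langle I\rangle\}\cup\{\infty\})$. A parent function of $\mathcal{F}$ is a linear map $\varphi:\mathbb{F}_q^\nu\to V$ such that $\{\langle\varphi(e_i)\rangle: i=1,\dots,\nu\}=\mathcal{F}$, where $e_i$ are the standard basis vectors; $\ker\varphi$ is a parent code. For a linear map $\psi:(X,\operatorname{wt}_X)\to Y$, $\operatorname{wt}_{\mathrm{quot},\psi}(y)=\min\{\operatorname{wt}_X(w):w\in\psi^{-1}(y)\}$, and $\infty$ if $\psi^{-1}(y)=\emptyset$. *)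

theory Defs
  imports "HOL-Analysis.Analysis" "HOL-Library.Extended_Nat"
begin

text \<open>The ambient space V is a type 'v with a scalar multiplication
  smul over a finite field 'a (= F_q). F_q^nu is 'a^'n, 'n a finite index type
  with CARD('n) = nu.\<close>

text \<open>Projective point family: a set of one-dimensional subspaces of V.\<close>
definition proj_point_family :: "('a::field \<Rightarrow> 'v::ab_group_add \<Rightarrow> 'v) \<Rightarrow> 'v set set \<Rightarrow> bool" where
  "proj_point_family smul F \<longleftrightarrow> (\<forall>P\<in>F. \<exists>f. f \<noteq> 0 \<and> P = module.span smul {f})"

text \<open>Projective weight: min |I| over I subset F with x in the span of I, or infinity.\<close>
definition proj_weight :: "('a::field \<Rightarrow> 'v::ab_group_add \<Rightarrow> 'v) \<Rightarrow> 'v set set \<Rightarrow> 'v \<Rightarrow> enat" where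
  "proj_weight smul F x =
     Inf {enat (card I) | I. I \<subseteq> F \<and> finite I \<and> x \<in> module.span smul (\<Union>I)}"

text \<open>Parent function: a linear map with {<phi(e_i)>} = F.\<close>
definition parent_function :: "('a::field \<Rightarrow> 'v::ab_group_add \<Rightarrow> 'v) \<Rightarrow> 'v set set
    \<Rightarrow> ('a^'n::finite \<Rightarrow> 'v) \<Rightarrow> bool" where
  "parent_function smul F \<phi> \<longleftrightarrow>
     Vector_Spaces.linear ((*s) :: 'a \<Rightarrow> 'a^'n \<Rightarrow> 'a^'n) smul \<phi> \<and>
     (\<lambda>i. module.span smul {\<phi> (axis i 1)}) ` UNIV = F"

definition hamming_weight :: "'a::zero^'n::finite \<Rightarrow> enat" where
  "hamming_weight x = enat (card {i. x $ i \<noteq> 0})"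

definition hamming_dist :: "'a^'n::finite \<Rightarrow> 'a^'n \<Rightarrow> nat" where
  "hamming_dist x y = card {i. x $ i \<noteq> y $ i}"

text \<open>Quotient weight: min of wt over the preimage, infinity if the preimage is empty
  (Inf of the empty set of enat is infinity).\<close>
definition wt_quot :: "('x \<Rightarrow> enat) \<Rightarrow> ('x \<Rightarrow> 'y) \<Rightarrow> 'y \<Rightarrow> enat" where
  "wt_quot wt \<psi> y = (INF w \<in> \<psi> -` {y}. wt w)"

end

theory Submission
  imports Defs
begin

theorem proposition4p1:
  fixes smul :: "'a::{field,finite} \<Rightarrow> 'v::ab_group_add \<Rightarrow> 'v"
    and B :: "'v set" and F :: "'v set set"
    and \<phi> :: "'a^'n::finite \<Rightarrow> 'v"
  assumes "finite_dimensional_vector_space smul B"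
    and "proj_point_family smul F"
    and "card F = CARD('n)"
    and "parent_function smul F \<phi>"
  shows "(\<forall>x. proj_weight smul F x = wt_quot hamming_weight \<phi> x) \<and>
         (\<forall>x y. \<phi> x = 0 \<longrightarrow> \<phi> y = 0 \<longrightarrow> x \<noteq> y \<longrightarrow> hamming_dist x y \<ge> 3)"
proof -
  interpret V: vector_space smul
    using assms(1) finite_dimensional_vector_space.axioms(1) by blast
  have lin: "Vector_Spaces.linear ((*s) :: 'a \<Rightarrow> 'a^'n \<Rightarrow> 'a^'n) smul \<phi>"
    and gF: "(\<lambda>i. V.span {\<phi> (axis i 1)}) ` UNIV = F"
    using assms(4) unfolding parent_function_def by auto
  interpret L: Vector_Spaces.linear "(*s) :: 'a \<Rightarrow> 'a^'n \<Rightarrow> 'a^'n" smul \<phi> by (rule lin)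
  define e where "e i = \<phi> (axis i 1)" for i
  define g where "g i = V.span {e i}" for i
  have gF': "range g = F" using gF unfolding g_def e_def by simp
  have injg: "inj g"
  proof -
    have "card (range g) = card (UNIV :: 'n set)" using gF' assms(3) by simp
    then show ?thesis by (simp add: eq_card_imp_inj_on)
  qed
  have e0: "e i \<noteq> 0" for i
  proof
    assume "e i = 0"
    then have "g i = {0}" unfolding g_def by (simp add: V.span_singleton)
    moreover obtain f where "f \<noteq> 0" "g i = V.span {f}"
      using assms(2) gF' unfolding proj_point_family_def by blast
    ultimately show False using V.span_base[of f "{f}"] by auto
  qed
  have same_idx: "i = j" if "e i \<in> V.span {e j}" "e j \<in> V.span {e i}" for i j
  proof -
    have "g i \<subseteq> g j" unfolding g_def
      using V.span_mono[of "{e i}" "V.span {e j}"] that(1) V.span_span by auto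
    moreover have "g j \<subseteq> g i" unfolding g_def
      using V.span_mono[of "{e j}" "V.span {e i}"] that(2) V.span_span by auto
    ultimately show ?thesis using injg by (auto dest: injD)
  qed
  have inje: "inj e"
    by (rule injI) (metis V.span_base insertI1 same_idx)
  have expand: "\<phi> w = (\<Sum>i\<in>UNIV. smul (w$i) (e i))" for w
  proof -
    have "\<phi> w = \<phi> (\<Sum>i\<in>UNIV. (w$i) *s axis i 1)" by (simp add: basis_expansion)
    also have "\<dots> = (\<Sum>i\<in>UNIV. smul (w$i) (e i))" by (simp add: L.sum L.scale e_def)
    finally show ?thesis .
  qed
  have expandS: "\<phi> w = (\<Sum>i\<in>S. smul (w$i) (e i))" if "{i. w$i \<noteq> 0} \<subseteq> S" for w S
  proof -
    have "(\<Sum>i\<in>UNIV. smul (w$i) (e i)) = (\<Sum>i\<in>S. smul (w$i) (e i))"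
      by (rule sum.mono_neutral_right) (use that in auto)
    then show ?thesis using expand by simp
  qed
  have part1: "proj_weight smul F x = wt_quot hamming_weight \<phi> x" for x
  proof (rule antisym)
    show "proj_weight smul F x \<le> wt_quot hamming_weight \<phi> x"
      unfolding wt_quot_def
    proof (rule INF_greatest)
      fix w assume "w \<in> \<phi> -` {x}"
      then have xw: "x = \<phi> w" by simp
      define S where "S = {i. w$i \<noteq> 0}"
      define I where "I = g ` S"
      have "I \<subseteq> F" unfolding I_def using gF' by auto
      moreover have "finite I" unfolding I_def by simp
      moreover have "x \<in> V.span (\<Union>I)"
      proof -
        have "x = (\<Sum>i\<in>S. smul (w$i) (e i))" using xw expandS[of w S] S_def by simp
        also have "\<dots> \<in> V.span (\<Union>I)"
        proof (rule V.span_sum, rule V.span_scale)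
          fix i assume "i \<in> S"
          then have "e i \<in> \<Union>I" unfolding I_def g_def using V.span_base by blast
          then show "e i \<in> V.span (\<Union>I)" by (rule V.span_base)
        qed
        finally show ?thesis .
      qed
      ultimately have "proj_weight smul F x \<le> enat (card I)"
        unfolding proj_weight_def by (intro Inf_lower) blast
      also have "\<dots> \<le> enat (card S)" unfolding I_def by (simp add: card_image_le)
      finally show "proj_weight smul F x \<le> hamming_weight w"
        unfolding hamming_weight_def S_def .
    qed
  next
    show "wt_quot hamming_weight \<phi> x \<le> proj_weight smul F x"
      unfolding proj_weight_def
    proof (rule Inf_greatest, safe)
      fix I assume IF: "I \<subseteq> F" and fI: "finite I" and xI: "x \<in> V.span (\<Union>I)"
      define S where "S = {i. g i \<in> I}"
      have IS: "I = g ` S" unfolding S_def using IF gF' by auto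
      have cS: "card S = card I" unfolding IS by (rule card_image[symmetric]) (meson injg inj_on_subset subset_UNIV)
      have "\<Union>I \<subseteq> V.span (e ` S)"
      proof
        fix v assume "v \<in> \<Union>I"
        then obtain i where "i \<in> S" "v \<in> g i" unfolding IS by auto
        then show "v \<in> V.span (e ` S)" unfolding g_def
          using V.span_mono[of "{e i}" "e ` S"] by auto
      qed
      then have "V.span (\<Union>I) \<subseteq> V.span (e ` S)"
        using V.span_mono V.span_span by metis
      with xI have "x \<in> V.span (e ` S)" by auto
      then obtain c where xc: "x = (\<Sum>v\<in>e ` S. smul (c v) v)"
        using V.span_finite[of "e ` S"] by auto
      also have "\<dots> = (\<Sum>i\<in>S. smul (c (e i)) (e i))"
        by (rule sum.reindex_cong[of e]) (auto intro: inj_on_subset[OF inje])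
      finally have xc': "x = (\<Sum>i\<in>S. smul (c (e i)) (e i))" .
      define w where "w = (\<chi> i. if i \<in> S then c (e i) else 0)"
      have supp: "{i. w$i \<noteq> 0} \<subseteq> S" unfolding w_def by auto
      have "\<phi> w = (\<Sum>i\<in>S. smul (w$i) (e i))" by (rule expandS[OF supp])
      also have "\<dots> = x" unfolding xc' w_def by (intro sum.cong) auto
      finally have "w \<in> \<phi> -` {x}" by simp
      then have "wt_quot hamming_weight \<phi> x \<le> hamming_weight w"
        unfolding wt_quot_def by (rule INF_lower)
      also have "\<dots> \<le> enat (card S)" unfolding hamming_weight_def
        using card_mono[OF _ supp] by simp
      finally show "wt_quot hamming_weight \<phi> x \<le> enat (card I)" using cS by simp
    qed
  qed
  have part2: "hamming_dist x y \<ge> 3" if "\<phi> x = 0" "\<phi> y = 0" "x \<noteq> y" for x y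
  proof (rule ccontr)
    define d where "d = x - y"
    define S where "S = {i. d$i \<noteq> 0}"
    have pd: "\<phi> d = 0" unfolding d_def using that by (simp add: L.diff)
    have hd: "hamming_dist x y = card S" unfolding hamming_dist_def S_def d_def by simp
    assume "\<not> 3 \<le> hamming_dist x y"
    then have c: "card S < 3" using hd by simp
    have "S \<noteq> {}" using that(3) unfolding S_def d_def by (auto simp: vec_eq_iff)
    then have "card S \<noteq> 0" by simp
    with c have "card S = 1 \<or> card S = 2" by linarith
    then show False
    proof
      assume "card S = 1"
      then obtain i where Si: "S = {i}" by (auto simp: card_Suc_eq)
      have "\<phi> d = smul (d$i) (e i)" using expandS[of d "{i}"] Si S_def by simp
      then show False using pd e0[of i] Si S_def by auto
    next
      assume "card S = 2"
      then obtain i j where Sij: "S = {i, j}" "i \<noteq> j" by (auto simp: card_Suc_eq numeral_2_eq_2)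
      have di: "d$i \<noteq> 0" and dj: "d$j \<noteq> 0" using Sij S_def by auto
      have "\<phi> d = smul (d$i) (e i) + smul (d$j) (e j)" using expandS[of d "{i,j}"] Sij S_def by simp
      with pd have eq: "smul (d$i) (e i) = - smul (d$j) (e j)" by (simp add: eq_neg_iff_add_eq_0)
      have a: "e i \<in> V.span {e j}"
      proof -
        have "e i = smul (inverse (d$i)) (smul (d$i) (e i))" using di by simp
        also have "\<dots> = smul (inverse (d$i)) (smul (- (d$j)) (e j))" using eq by (simp add: V.scale_minus_left)
        finally show ?thesis by (metis V.span_base V.span_scale singletonI)
      qed
      have b: "e j \<in> V.span {e i}"
      proof -
        have "e j = smul (inverse (d$j)) (smul (d$j) (e j))" using dj by simp
        also have "\<dots> = smul (inverse (d$j)) (smul (- (d$i)) (e i))" using eq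
          by (metis V.scale_minus_left minus_minus)
        finally show ?thesis by (metis V.span_base V.span_scale singletonI)
      qed
      show False using same_idx[OF a b] Sij(2) by simp
    qed
  qed
  show ?thesis using part1 part2 by blast
qed

end
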